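(* Let $P\subset\mathbf H^2$ be a convex polygon and let $\tau:S\to S$ be the homeomorphism of the circle at infinity $S$ induced by the outer billiard map about $P$. Then $\tau$ is not periodic, i.e. there is no $N\ge1$ with $\tau^N=\mathrm{id}_S$.
   Context: Outer billiard in $\mathbf H^2$: $X=\mathbf H^2\setminus P$ is partitioned by the geodesic rays extending the sides of $P$ (the ray extending side $ab$ beyond $a$, vertices counterclockwise) into regions $X_a$ indexed by vertices ($X_a$ = points $x$ for which the geodesic through $x$ and $a$ supports $P$ with $P$ on a fixed side), and the map $T$ is the geodesic symmetry about $a$ on $X_a$. This map extends continuously to a homeomorphism $\tau$ of the circle at infinity. *)

theory Defs
  imports "HOL-Analysis.Analysis"
begin

text \<open>Model: the Beltrami--Klein model of the hyperbolic plane, i.e. the open unit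
disc in the complex plane.  Geodesics are (open) Euclidean chords, so hyperbolic
convexity coincides with Euclidean convexity and the circle at infinity is the unit
circle.\<close>

definition hyp_plane :: "complex set" where
  "hyp_plane = ball 0 1"

definition circle_at_infinity :: "complex set" where
  "circle_at_infinity = sphere 0 1"

text \<open>A (nondegenerate) convex polygon of the hyperbolic plane, given by its finite
set of vertices V (the extreme points of its convex hull).\<close>

definition hyp_convex_polygon :: "complex set \<Rightarrow> bool" where
  "hyp_convex_polygon V \<longleftrightarrow> finite V \<and> V \<subseteq> hyp_plane \<and>
     interior (convex hull V) \<noteq> {} \<and> (\<forall>v\<in>V. v extreme_point_of (convex hull V))"

text \<open>Geodesic (point) symmetry about a point a of the Klein model.  It is the
projective map induced by the Lorentz reflection X \<mapsto> -X - 2<X,A>A of the hyperboloid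
model; its denominator is positive on the closed disc.\<close>

definition geod_symm :: "complex \<Rightarrow> complex \<Rightarrow> complex" where
  "geod_symm a x =
     (of_real (2 * (1 - x \<bullet> a)) * a - of_real (1 - (cmod a)\<^sup>2) * x)
       / of_real (2 * (1 - x \<bullet> a) - (1 - (cmod a)\<^sup>2))"

text \<open>Orientation: cross u v > 0 iff v is to the left of u.\<close>

definition cross :: "complex \<Rightarrow> complex \<Rightarrow> real" where
  "cross u v = Im (cnj u * v)"

text \<open>The region X_a: points x of X = H^2 \ P such that the geodesic through x and the
vertex a supports P, with P lying (weakly) on the left of the oriented geodesic
from x to a.  On X_a the outer billiard map is T x = geod_symm a x.\<close>

definition billiard_region :: "complex set \<Rightarrow> complex \<Rightarrow> complex set" where
  "billiard_region V a =
     {x \<in> hyp_plane - convex hull V. a \<in> V \<and> (\<forall>p\<in>convex hull V. cross (a - x) (p - x) \<ge> 0)}"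

text \<open>tau : S \<rightarrow> S is the continuous extension of the outer billiard map T to the
circle at infinity: T x tends to tau xi as x \<in> X tends to xi.\<close>

definition boundary_extension :: "complex set \<Rightarrow> (complex \<Rightarrow> complex) \<Rightarrow> bool" where
  "boundary_extension V \<tau> \<longleftrightarrow>
     \<tau> ` circle_at_infinity \<subseteq> circle_at_infinity \<and>
     (\<forall>\<xi>\<in>circle_at_infinity. \<forall>\<epsilon>>0. \<exists>\<delta>>0. \<forall>a x.
        x \<in> billiard_region V a \<and> dist x \<xi> < \<delta> \<longrightarrow> dist (geod_symm a x) (\<tau> \<xi>) < \<epsilon>)"

end

theory Submission
  imports Defs
begin

definition msym :: "complex \<Rightarrow> complex \<Rightarrow> complex" where
  "msym a z = (a - z) / (1 - cnj a * z)"

lemma unit_den: assumes "cmod z = 1" "cmod a < 1" shows "1 - cnj a * z \<noteq> 0"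
proof
  assume "1 - cnj a * z = 0"
  hence "cnj a * z = 1" by simp
  hence "cmod (cnj a * z) = 1" by simp
  thus False using assms by (simp add: norm_mult)
qed

lemma inner_re: "z \<bullet> a = Re (cnj z * a)"
  by (simp add: inner_complex_def)

lemma geod_eq: assumes "cmod z = 1" "cmod a < 1" shows "geod_symm a z = msym a z"
proof -
  have z0: "z \<noteq> 0" using assms by auto
  have cz: "cnj z = 1 / z" using assms(1)
    by (metis complex_norm_square mult.commute nonzero_eq_divide_eq of_real_1 power_one z0 mult_1)
  have r: "complex_of_real (z \<bullet> a) = (cnj z * a + z * cnj a) / 2"
    by (simp add: inner_re complex_eq_iff)
  have m: "complex_of_real ((cmod a)\<^sup>2) = a * cnj a"
    by (rule complex_norm_square)
  have ina: "z \<bullet> a \<le> cmod a" using norm_cauchy_schwarz[of z a] assms(1) by simp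
  have D: "2 * (1 - z \<bullet> a) - (1 - (cmod a)\<^sup>2) > 0"
  proof -
    have "2 * (1 - z \<bullet> a) - (1 - (cmod a)\<^sup>2) \<ge> 2 * (1 - cmod a) - (1 - (cmod a)\<^sup>2)" using ina by simp
    moreover have "2 * (1 - cmod a) - (1 - (cmod a)\<^sup>2) = (1 - cmod a)^2" by (simp add: power2_eq_square algebra_simps)
    moreover have "(1 - cmod a)^2 > 0" using assms(2) by simp
    ultimately show ?thesis by linarith
  qed
  have d1: "1 - cnj a * z \<noteq> 0" using unit_den assms by blast
  have key: "(of_real (2 * (1 - z \<bullet> a)) * a - of_real (1 - (cmod a)\<^sup>2) * z) * (1 - cnj a * z)
      = of_real (2 * (1 - z \<bullet> a) - (1 - (cmod a)\<^sup>2)) * (a - z)"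
    unfolding of_real_diff of_real_mult r m of_real_1 of_real_numeral cz using z0
    by (simp add: field_simps)
  have Dc: "complex_of_real (2 * (1 - z \<bullet> a) - (1 - (cmod a)\<^sup>2)) \<noteq> 0" using D by (metis of_real_eq_0_iff order_less_irrefl)
  show ?thesis unfolding geod_symm_def msym_def using key Dc d1
    by (simp add: field_simps)
qed


lemma cnj_unit: assumes "cmod z = 1" shows "cnj z = 1 / z"
proof -
  have z0: "z \<noteq> 0" using assms by auto
  have "z * cnj z = 1" using complex_norm_square[of z] assms by simp
  thus ?thesis using z0 by (simp add: field_simps mult.commute)
qed

lemma cnorm: assumes "cmod z = 1" shows "cmod (1 - cnj a * z) = cmod (z - a)"
proof -
  have "1 - cnj a * z = z * cnj (z - a)" using cnj_unit[OF assms] assms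
    by (auto simp: field_simps)
  hence "cmod (1 - cnj a * z) = cmod z * cmod (cnj (z - a))" by (simp add: norm_mult)
  thus ?thesis using assms by (metis complex_cnj_diff complex_mod_cnj mult_1)
qed

lemma msym_S: assumes "cmod z = 1" "cmod a < 1" shows "cmod (msym a z) = 1"
proof -
  have "cmod (1 - cnj a * z) \<noteq> 0" using unit_den[OF assms] by simp
  moreover have "cmod (a - z) = cmod (1 - cnj a * z)" using cnorm[OF assms(1)] by (simp add: norm_minus_commute)
  ultimately show ?thesis unfolding msym_def by (simp add: norm_divide)
qed

lemma msym_diff: assumes "1 - cnj a * z \<noteq> 0" "1 - cnj a * w \<noteq> 0"
  shows "msym a z - msym a w = - of_real (1 - (cmod a)\<^sup>2) * (z - w) / ((1 - cnj a * z) * (1 - cnj a * w))"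
proof -
  have m: "complex_of_real ((cmod a)\<^sup>2) = a * cnj a" by (rule complex_norm_square)
  show ?thesis unfolding msym_def of_real_diff m of_real_1 using assms
    by (simp add: field_simps)
qed

lemma msym_ray: assumes "cmod z = 1" "cmod a < 1"
  shows "msym a z - a = - of_real ((1 - (cmod a)\<^sup>2) / (cmod (z - a))\<^sup>2) * (z - a)"
proof -
  have z0: "z \<noteq> 0" using assms by auto
  have za: "z \<noteq> a" using assms by auto
  have d: "1 - cnj a * z \<noteq> 0" using unit_den[OF assms] .
  have m: "complex_of_real ((cmod a)\<^sup>2) = a * cnj a" by (rule complex_norm_square)
  have m2: "complex_of_real ((cmod (z - a))\<^sup>2) = (z - a) * cnj (z - a)" by (rule complex_norm_square)
  have cz: "cnj z = 1 / z" using cnj_unit[OF assms(1)] .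
  have n0: "complex_of_real ((cmod (z - a))\<^sup>2) \<noteq> 0" using za by simp
  have h1: "msym a z - a = - (complex_of_real (1 - (cmod a)\<^sup>2)) * z / (1 - cnj a * z)"
    unfolding msym_def of_real_diff m of_real_1 using d by (simp add: field_simps)
  have h2: "z / (1 - cnj a * z) = (z - a) / complex_of_real ((cmod (z - a))\<^sup>2)"
    using d n0 unfolding m2 complex_cnj_diff cz using z0 za
    by (simp add: field_simps)
  have "msym a z - a = - (complex_of_real (1 - (cmod a)\<^sup>2)) * (z / (1 - cnj a * z))"
    using h1 by simp
  also have "\<dots> = - (complex_of_real (1 - (cmod a)\<^sup>2)) * ((z - a) / complex_of_real ((cmod (z - a))\<^sup>2))"
    using h2 by simp
  finally show ?thesis using za by (simp add: field_simps)
qed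



fun gw :: "complex list \<Rightarrow> complex \<Rightarrow> complex" where
  "gw [] z = z" | "gw (a#W) z = gw W (msym a z)"
fun Kw :: "complex list \<Rightarrow> complex" where
  "Kw [] = 1" | "Kw (a#W) = - complex_of_real (1 - (cmod a)\<^sup>2) * Kw W"
fun ew :: "complex list \<Rightarrow> complex \<Rightarrow> complex" where
  "ew [] z = 1" | "ew (a#W) z = ew W (msym a z) / (1 - cnj a * z)"
definition ff :: "complex \<Rightarrow> complex \<Rightarrow> real" where
  "ff a z = (1 - (cmod a)\<^sup>2) / (cmod (1 - cnj a * z))\<^sup>2"
fun Fw :: "complex list \<Rightarrow> complex \<Rightarrow> real" where
  "Fw [] z = 1" | "Fw (a#W) z = ff a z * Fw W (msym a z)"

definition inball :: "complex list \<Rightarrow> bool" where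
  "inball W \<longleftrightarrow> (\<forall>a\<in>set W. cmod a < 1)"

lemma inball_Cons[simp]: "inball (a#W) \<longleftrightarrow> cmod a < 1 \<and> inball W"
  by (simp add: inball_def)

lemma gw_S: "inball W \<Longrightarrow> cmod z = 1 \<Longrightarrow> cmod (gw W z) = 1"
  by (induction W arbitrary: z) (auto simp: msym_S)

lemma gw_diff: "inball W \<Longrightarrow> cmod z = 1 \<Longrightarrow> cmod w = 1 \<Longrightarrow>
  gw W z - gw W w = (z - w) * Kw W * ew W z * ew W w"
proof (induction W arbitrary: z w)
  case Nil
  then show ?case by simp
next
  case (Cons a W)
  have a: "cmod a < 1" "inball W" using Cons.prems by auto
  have dz: "1 - cnj a * z \<noteq> 0" using unit_den Cons.prems a by blast
  have dw: "1 - cnj a * w \<noteq> 0" using unit_den Cons.prems a by blast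
  have IH: "gw W (msym a z) - gw W (msym a w) = (msym a z - msym a w) * Kw W * ew W (msym a z) * ew W (msym a w)"
    using Cons.IH a Cons.prems msym_S by blast
  show ?case using IH msym_diff[OF dz dw] dz dw by (simp add: field_simps)
qed

lemma msym_inj: assumes "cmod a < 1" "cmod z = 1" "cmod w = 1" "msym a z = msym a w" shows "z = w"
proof -
  have dz: "1 - cnj a * z \<noteq> 0" using unit_den assms by blast
  have dw: "1 - cnj a * w \<noteq> 0" using unit_den assms by blast
  have "- of_real (1 - (cmod a)\<^sup>2) * (z - w) / ((1 - cnj a * z) * (1 - cnj a * w)) = 0"
    using msym_diff[OF dz dw] assms(4) by simp
  moreover have "complex_of_real (1 - (cmod a)\<^sup>2) \<noteq> 0"
  proof -
    have "(cmod a)\<^sup>2 < 1" using assms(1) by (simp add: power_less_one_iff abs_square_less_1)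
    hence "1 - (cmod a)\<^sup>2 \<noteq> 0" by simp
    thus ?thesis by (metis of_real_eq_0_iff)
  qed
  ultimately show ?thesis using dz dw by simp
qed

lemma gw_inj: "inball W \<Longrightarrow> cmod z = 1 \<Longrightarrow> cmod w = 1 \<Longrightarrow> gw W z = gw W w \<Longrightarrow> z = w"
proof (induction W arbitrary: z w)
  case Nil
  then show ?case by simp
next
  case (Cons a W)
  have "msym a z = msym a w" using Cons msym_S by auto
  thus ?case using msym_inj Cons.prems by auto
qed

lemma fix_pair: assumes "inball W" "cmod z = 1" "cmod w = 1" "z \<noteq> w" "gw W z = z" "gw W w = w"
  shows "Kw W * ew W z * ew W w = 1"
proof -
  have "z - w = (z - w) * (Kw W * ew W z * ew W w)" using gw_diff[OF assms(1-3)] assms(5,6)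
    by (simp add: mult.assoc)
  thus ?thesis using assms(4) by simp
qed

lemma rigid: assumes "inball W" "cmod p = 1" "cmod q = 1" "cmod r = 1"
  "p \<noteq> q" "p \<noteq> r" "q \<noteq> r" "gw W p = p" "gw W q = q" "gw W r = r"
  and z: "cmod z = 1"
  shows "gw W z = z"
proof -
  let ?K = "Kw W" and ?e = "ew W"
  have pq: "?K * ?e p * ?e q = 1" using fix_pair assms by blast
  have pr: "?K * ?e p * ?e r = 1" using fix_pair assms by blast
  have qr: "?K * ?e q * ?e r = 1" using fix_pair assms by blast
  have "?e q = ?e r" using pq pr by (metis mult_cancel_left mult_zero_left zero_neq_one)
  have d1: "gw W z - p = (z - p) * (?K * ?e z * ?e p)" using gw_diff[OF assms(1) z assms(2)] assms(8)
    by (simp add: ac_simps)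
  have "?e p = ?e r" using pq qr
    by (metis mult.commute mult.left_commute mult_cancel_left mult_zero_left zero_neq_one)
  have d2: "gw W z - q = (z - q) * (?K * ?e z * ?e q)" using gw_diff[OF assms(1) z assms(3)] assms(9)
    by (simp add: ac_simps)
  have eq: "?e p = ?e q" using \<open>?e q = ?e r\<close> \<open>?e p = ?e r\<close> by simp
  let ?L = "?K * ?e z * ?e p"
  have "q - p = (gw W z - p) - (gw W z - q)" by simp
  also have "\<dots> = (z - p) * ?L - (z - q) * ?L" using d1 d2 eq by simp
  also have "\<dots> = (q - p) * ?L" by (simp add: algebra_simps)
  finally have "q - p = (q - p) * ?L" .
  hence "?L = 1" using assms(5) by simp
  thus ?thesis using d1 by simp
qed

lemma Fw_eq: "inball W \<Longrightarrow> cmod z = 1 \<Longrightarrow> Fw W z = cmod (Kw W) * (cmod (ew W z))\<^sup>2"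
proof (induction W arbitrary: z)
  case Nil
  then show ?case by simp
next
  case (Cons a W)
  have a: "cmod a < 1" "inball W" using Cons.prems by auto
  have pos: "1 - (cmod a)\<^sup>2 \<ge> 0" using a(1) by (simp add: abs_square_le_1)
  have IH: "Fw W (msym a z) = cmod (Kw W) * (cmod (ew W (msym a z)))\<^sup>2" using Cons a msym_S by blast
  have dz: "1 - cnj a * z \<noteq> 0" using unit_den Cons.prems a by blast
  have k: "cmod (Kw (a#W)) = (1 - (cmod a)\<^sup>2) * cmod (Kw W)"
    using pos by (simp only: Kw.simps norm_mult norm_minus_cancel norm_of_real abs_of_nonneg)
  have e: "cmod (ew (a#W) z) = cmod (ew W (msym a z)) / cmod (1 - cnj a * z)"
    by (simp only: ew.simps norm_divide)
  show ?case unfolding k e Fw.simps IH ff_def using dz by (simp add: field_simps power2_eq_square)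
qed

lemma id_F: assumes "inball W" "\<forall>z. cmod z = 1 \<longrightarrow> gw W z = z" "cmod c = 1"
  shows "Fw W c = 1"
proof -
  let ?K = "Kw W" and ?e = "ew W"
  define w where "w = - c"
  define u where "u = \<i> * c"
  have c0: "c \<noteq> 0" using assms by auto
  have nw: "cmod w = 1" "cmod u = 1" using assms(3) by (auto simp: w_def u_def norm_mult)
  have cw: "c \<noteq> w" using c0 unfolding w_def by (auto simp: complex_eq_iff)
  have cu: "c \<noteq> u" using c0 unfolding u_def by (metis complex_i_not_one mult.commute mult_cancel_right1)
  have wu: "w \<noteq> u" using c0 unfolding u_def w_def
    by (metis complex_i_not_one add.inverse_inverse i_squared minus_mult_commute mult.assoc mult_cancel_right1 mult_minus1 mult_minus_right)
  have cwp: "?K * ?e c * ?e w = 1" using fix_pair assms nw cw by blast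
  have cup: "?K * ?e c * ?e u = 1" using fix_pair assms nw cu by blast
  have wup: "?K * ?e w * ?e u = 1" using fix_pair assms nw wu by blast
  have "?e w = ?e u" using cwp cup by (metis mult_cancel_left mult_zero_left zero_neq_one)
  have "?e c = ?e u" using cwp wup
    by (metis mult.commute mult.left_commute mult_cancel_left mult_zero_left zero_neq_one)
  hence "?K * ?e c * ?e c = 1" using cwp \<open>?e w = ?e u\<close> by simp
  hence "cmod (?K * ?e c * ?e c) = 1" by simp
  hence "cmod ?K * (cmod (?e c))\<^sup>2 = 1" by (simp add: norm_mult power2_eq_square)
  thus ?thesis using Fw_eq assms by simp
qed



definition validv :: "complex set \<Rightarrow> complex \<Rightarrow> complex \<Rightarrow> bool" where
  "validv V a z \<longleftrightarrow> a \<in> V \<and> (\<forall>p\<in>V. cross (a - z) (p - z) \<ge> 0)"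

lemma cross_comp: "cross u v = Re u * Im v - Im u * Re v"
  by (simp add: cross_def)

lemma cross_trans:
  assumes "cross u v \<ge> 0" "cross v w \<ge> 0" "Re (cnj e * u) > 0" "Re (cnj e * v) > 0" "Re (cnj e * w) > 0"
  shows "cross u w \<ge> 0"
proof -
  have id: "cross u v * Re (cnj e * w) + cross v w * Re (cnj e * u) = cross u w * Re (cnj e * v)"
    by (simp add: cross_comp algebra_simps)
  have "cross u v * Re (cnj e * w) + cross v w * Re (cnj e * u) \<ge> 0"
    using assms by (simp add: add_nonneg_nonneg)
  hence "cross u w * Re (cnj e * v) \<ge> 0" using id by simp
  thus ?thesis using assms(4) by (simp add: zero_le_mult_iff)
qed

lemma mindir:
  assumes "finite D" "D \<noteq> {}" "\<forall>d\<in>D. Re (cnj e * d) > 0"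
  shows "\<exists>m\<in>D. \<forall>x\<in>D. cross m x \<ge> 0"
  using assms
proof (induction D rule: finite_ne_induct)
  case (singleton x)
  then show ?case by (simp add: cross_def)
next
  case (insert x F)
  then obtain m where m: "m \<in> F" "\<forall>y\<in>F. cross m y \<ge> 0" by auto
  show ?case
  proof (cases "cross x m \<ge> 0")
    case True
    have "\<forall>y\<in>F. cross x y \<ge> 0"
      using cross_trans[OF True] m insert.prems by blast
    thus ?thesis by (auto simp: cross_def)
  next
    case False
    have "cross m x = - cross x m" by (simp add: cross_comp algebra_simps)
    hence "cross m x \<ge> 0" using False by simp
    thus ?thesis using m by auto
  qed
qed

lemma valid_ex:
  assumes "finite V" "V \<noteq> {}" "V \<subseteq> ball 0 1" "cmod \<xi> = 1"
  shows "\<exists>a. validv V a \<xi>"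
proof -
  have "\<forall>d\<in>(\<lambda>p. p - \<xi>) ` V. Re (cnj (-\<xi>) * d) > 0"
  proof
    fix d assume "d \<in> (\<lambda>p. p - \<xi>) ` V"
    then obtain p where p: "p \<in> V" "d = p - \<xi>" by auto
    have "cmod p < 1" using p assms(3) by auto
    have "Re (cnj \<xi> * p) \<le> cmod (cnj \<xi> * p)" by (rule complex_Re_le_cmod)
    also have "\<dots> = cmod p" using assms(4) by (simp add: norm_mult)
    finally have "Re (cnj \<xi> * p) < 1" using \<open>cmod p < 1\<close> by simp
    moreover have "Re (cnj \<xi> * \<xi>) = 1" using assms(4) complex_norm_square[of \<xi>]
      by (metis Re_complex_of_real mult.commute one_power2)
    moreover have "Re (cnj (-\<xi>) * d) = Re (cnj \<xi> * \<xi>) - Re (cnj \<xi> * p)" unfolding p(2)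
      by (simp add: algebra_simps)
    ultimately show "Re (cnj (-\<xi>) * d) > 0" by linarith
  qed
  then obtain m where m: "m \<in> (\<lambda>p. p - \<xi>) ` V" "\<forall>x\<in>(\<lambda>p. p - \<xi>) ` V. cross m x \<ge> 0"
    using mindir[of "(\<lambda>p. p - \<xi>) ` V"] assms by blast
  then obtain a where "a \<in> V" "m = a - \<xi>" by auto
  thus ?thesis using m unfolding validv_def by auto
qed

lemma hull_valid:
  assumes "\<forall>p\<in>V. cross u (p - z) \<ge> 0"
  shows "\<forall>p\<in>convex hull V. cross u (p - z) \<ge> 0"
proof -
  have "convex {p. cross u (p - z) \<ge> 0}"
    unfolding convex_def
  proof (intro ballI allI impI, simp)
    fix x y :: complex and s t :: real
    assume xy: "0 \<le> cross u (x - z)" "0 \<le> cross u (y - z)" "0 \<le> s" "0 \<le> t" "s + t = 1"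
    have "cross u (s *\<^sub>R x + t *\<^sub>R y - z) = s * cross u (x - z) + t * cross u (y - z)"
    proof -
      have t: "t = 1 - s" using xy(5) by simp
      show ?thesis unfolding t by (simp add: cross_comp algebra_simps)
    qed
    thus "0 \<le> cross u (s *\<^sub>R x + t *\<^sub>R y - z)" using xy by simp
  qed
  hence "convex hull V \<subseteq> {p. cross u (p - z) \<ge> 0}"
    using assms by (intro hull_minimal) auto
  thus ?thesis by auto
qed



lemma geod_cont: assumes "cmod z = 1" "cmod a < 1" shows "continuous (at z) (geod_symm a)"
proof -
  have ina: "z \<bullet> a \<le> cmod a" using norm_cauchy_schwarz[of z a] assms(1) by simp
  have D: "2 * (1 - z \<bullet> a) - (1 - (cmod a)\<^sup>2) > 0"
  proof -
    have "2 * (1 - z \<bullet> a) - (1 - (cmod a)\<^sup>2) \<ge> 2 * (1 - cmod a) - (1 - (cmod a)\<^sup>2)" using ina by simp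
    moreover have "2 * (1 - cmod a) - (1 - (cmod a)\<^sup>2) = (1 - cmod a)^2" by (simp add: power2_eq_square algebra_simps)
    moreover have "(1 - cmod a)^2 > 0" using assms(2) by simp
    ultimately show ?thesis by linarith
  qed
  hence "complex_of_real (2 * (1 - z \<bullet> a) - (1 - (cmod a)\<^sup>2)) \<noteq> 0" by (metis of_real_eq_0_iff order_less_irrefl)
  thus ?thesis unfolding geod_symm_def by (intro continuous_intros) auto
qed

lemma tau_eq:
  assumes hp: "hyp_convex_polygon V" and be: "boundary_extension V \<tau>"
    and xi: "cmod \<xi> = 1" and va: "validv V a \<xi>"
  shows "\<tau> \<xi> = msym a \<xi>"
proof -
  have fin: "finite V" and Vb: "V \<subseteq> ball 0 1" using hp unfolding hyp_convex_polygon_def hyp_plane_def by auto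
  have aV: "a \<in> V" using va by (simp add: validv_def)
  have a1: "cmod a < 1" using aV Vb by auto
  have Vne: "V \<noteq> {}" using aV by auto
  have hv: "\<forall>p\<in>convex hull V. cross (a - \<xi>) (p - \<xi>) \<ge> 0"
    using hull_valid va unfolding validv_def by blast
  define M where "M = Max (cmod ` V)"
  have M1: "M < 1" unfolding M_def using fin Vne Vb by (subst Max_less_iff) auto
  have "convex hull V \<subseteq> cball 0 M"
    by (rule hull_minimal) (auto simp: M_def fin)
  hence hM: "\<forall>p\<in>convex hull V. cmod p \<le> M" by auto
  let ?g = "geod_symm a"
  show ?thesis
  proof (rule ccontr)
    assume ne: "\<tau> \<xi> \<noteq> msym a \<xi>"
    hence ne': "\<tau> \<xi> \<noteq> ?g \<xi>" using geod_eq xi a1 by simp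
    define \<epsilon> where "\<epsilon> = dist (\<tau> \<xi>) (?g \<xi>) / 2"
    have ep: "\<epsilon> > 0" using ne' by (simp add: \<epsilon>_def)
    have xiS: "\<xi> \<in> circle_at_infinity" using xi by (simp add: circle_at_infinity_def)
    obtain \<delta> where d: "\<delta> > 0" "\<forall>a x. x \<in> billiard_region V a \<and> dist x \<xi> < \<delta> \<longrightarrow> dist (geod_symm a x) (\<tau> \<xi>) < \<epsilon>"
      using be xiS ep unfolding boundary_extension_def by blast
    obtain \<delta>2 where d2: "\<delta>2 > 0" "\<forall>x. dist x \<xi> < \<delta>2 \<longrightarrow> dist (?g x) (?g \<xi>) < \<epsilon>"
      using geod_cont[OF xi a1] ep unfolding continuous_at_eps_delta by blast
    define L where "L = cmod (a - \<xi>)"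
    have L0: "L > 0" using xi a1 unfolding L_def by auto
    define m where "m = min \<delta> (min \<delta>2 (1 - M))"
    have m0: "m > 0" using d d2 M1 by (simp add: m_def)
    define t where "t = min (1/2) (m / (2 * L))"
    have t0: "t > 0" "t < 1" using m0 L0 by (auto simp: t_def)
    have tL: "t * L < m"
    proof -
      have "t * L \<le> (m / (2 * L)) * L" using L0 by (intro mult_right_mono) (auto simp: t_def)
      also have "\<dots> = m / 2" using L0 by simp
      finally show ?thesis using m0 by simp
    qed
    define x where "x = \<xi> + of_real t * (a - \<xi>)"
    have dx: "dist x \<xi> = t * L" using t0 by (simp add: x_def dist_norm norm_mult L_def)
    have "cmod x = cmod (of_real (1 - t) * \<xi> + of_real t * a)" by (simp add: x_def algebra_simps)
    also have "\<dots> \<le> cmod (of_real (1 - t) * \<xi>) + cmod (of_real t * a)" by (rule norm_triangle_ineq)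
    also have "\<dots> = (1 - t) + t * cmod a" using t0 xi by (simp only: norm_mult norm_of_real) simp
    also have "\<dots> < 1" using t0 a1 by (smt (verit) mult_strict_left_mono mult_cancel_left1)
    finally have xin: "x \<in> hyp_plane" by (simp add: hyp_plane_def)
    have "cmod \<xi> - cmod x \<le> cmod (\<xi> - x)" by (rule norm_triangle_ineq2)
    also have "cmod (\<xi> - x) = t * L" using dx by (simp add: dist_norm norm_minus_commute)
    finally have "cmod x > M" using xi tL unfolding m_def by linarith
    hence xnh: "x \<notin> convex hull V" using hM by force
    have "\<forall>p\<in>convex hull V. cross (a - x) (p - x) \<ge> 0"
    proof
      fix p assume p: "p \<in> convex hull V"
      have "cross (a - x) (p - x) = (1 - t) * cross (a - \<xi>) (p - \<xi>)"
        by (simp add: x_def cross_comp algebra_simps)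
      thus "cross (a - x) (p - x) \<ge> 0" using hv p t0 by simp
    qed
    hence xb: "x \<in> billiard_region V a" using xin xnh aV by (simp add: billiard_region_def)
    have "dist x \<xi> < \<delta>" "dist x \<xi> < \<delta>2" using dx tL unfolding m_def by auto
    hence "dist (?g x) (\<tau> \<xi>) < \<epsilon>" "dist (?g x) (?g \<xi>) < \<epsilon>" using d d2 xb by auto
    hence "dist (\<tau> \<xi>) (?g \<xi>) < 2 * \<epsilon>" by (smt (verit) dist_commute dist_triangle)
    thus False by (simp add: \<epsilon>_def)
  qed
qed



lemma edge_ex:
  assumes fin: "finite V" and Vb: "V \<subseteq> ball 0 1" and ab0: "a0 \<in> V" "b0 \<in> V" "a0 \<noteq> b0"
  shows "\<exists>c a b t. cmod c = 1 \<and> validv V a c \<and> validv V b c \<and> t > 1 \<and> b - c = of_real t * (a - c)"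
proof -
  have "Max (cmod ` V) \<in> cmod ` V" using fin ab0 by (intro Max_in) auto
  then obtain a where a: "a \<in> V" "cmod a = Max (cmod ` V)" by auto
  have amax: "\<forall>p\<in>V. cmod p \<le> cmod a" using a fin by simp
  have a1: "cmod a < 1" using a Vb by auto
  have pos: "\<forall>d\<in>(\<lambda>p. p - a) ` (V - {a}). Re (cnj (-a) * d) > 0"
  proof
    fix d assume "d \<in> (\<lambda>p. p - a) ` (V - {a})"
    then obtain p where p: "p \<in> V" "p \<noteq> a" "d = p - a" by auto
    have "(cmod p)^2 \<le> (cmod a)^2" using amax p by (simp add: power_mono)
    hence le: "(Re p)^2 + (Im p)^2 \<le> (Re a)^2 + (Im a)^2" by (simp add: cmod_power2)
    have "Re p \<noteq> Re a \<or> Im p \<noteq> Im a" using p(2) complex_eq_iff by blast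
    hence "(Re p - Re a)^2 + (Im p - Im a)^2 > 0"
    proof
      assume "Re p \<noteq> Re a"
      hence "(Re p - Re a)^2 > 0" by simp
      thus ?thesis by (simp add: add_pos_nonneg)
    next
      assume "Im p \<noteq> Im a"
      hence "(Im p - Im a)^2 > 0" by simp
      thus ?thesis by (simp add: add_nonneg_pos)
    qed
    moreover have "2 * Re (cnj (-a) * d) = (Re p - Re a)^2 + (Im p - Im a)^2 + (((Re a)^2 + (Im a)^2) - ((Re p)^2 + (Im p)^2))"
      unfolding p(3) by (simp add: power2_eq_square algebra_simps)
    ultimately show "Re (cnj (-a) * d) > 0" using le by linarith
  qed
  have ne: "(\<lambda>p. p - a) ` (V - {a}) \<noteq> {}" using ab0 by auto
  obtain m where m: "m \<in> (\<lambda>p. p - a) ` (V - {a})" "\<forall>x\<in>(\<lambda>p. p - a) ` (V - {a}). cross m x \<ge> 0"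
    using mindir[OF _ ne pos] fin by blast
  then obtain b where b: "b \<in> V" "b \<noteq> a" "m = b - a" by auto
  have bv: "\<forall>p\<in>V. cross (b - a) (p - a) \<ge> 0"
  proof
    fix p assume "p \<in> V"
    show "cross (b - a) (p - a) \<ge> 0"
    proof (cases "p = a")
      case True thus ?thesis by (simp add: cross_def)
    next
      case False thus ?thesis using m b \<open>p \<in> V\<close> by auto
    qed
  qed
  define h where "h = (\<lambda>s::real. cmod (a - of_real s * (b - a)))"
  have ba0: "cmod (b - a) > 0" using b by simp
  define s1 where "s1 = 2 / cmod (b - a)"
  have s1: "s1 \<ge> 0" using ba0 by (simp add: s1_def)
  have "cmod (of_real s1 * (b - a)) - cmod a \<le> h s1" unfolding h_def
    by (metis norm_minus_commute norm_triangle_ineq2)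
  moreover have "cmod (of_real s1 * (b - a)) = 2" using ba0 s1 by (simp only: norm_mult norm_of_real abs_of_nonneg) (simp add: s1_def)
  ultimately have h1: "1 \<le> h s1" using a1 by linarith
  have h0: "h 0 \<le> 1" using a1 by (simp add: h_def)
  have "continuous_on {0..s1} h" unfolding h_def by (intro continuous_intros)
  then obtain s where s: "0 \<le> s" "s \<le> s1" "h s = 1" using IVT'[of h 0 1 s1] h0 h1 s1 by blast
  have "s \<noteq> 0" using s(3) a1 by (auto simp: h_def)
  hence s0: "s > 0" using s by simp
  define c where "c = a - of_real s * (b - a)"
  have c1: "cmod c = 1" using s(3) by (simp add: h_def c_def)
  have va: "validv V a c" unfolding validv_def
  proof (intro conjI ballI)
    show "a \<in> V" by (rule a)
    fix p assume "p \<in> V"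
    have "cross (a - c) (p - c) = s * cross (b - a) (p - a)"
      by (simp add: c_def cross_comp algebra_simps)
    thus "cross (a - c) (p - c) \<ge> 0" using bv \<open>p \<in> V\<close> s0 by simp
  qed
  have vb: "validv V b c" unfolding validv_def
  proof (intro conjI ballI)
    show "b \<in> V" by (rule b)
    fix p assume "p \<in> V"
    have "cross (b - c) (p - c) = (1 + s) * cross (b - a) (p - a)"
      by (simp add: c_def cross_comp algebra_simps)
    thus "cross (b - c) (p - c) \<ge> 0" using bv \<open>p \<in> V\<close> s0 by simp
  qed
  define t where "t = (1 + s) / s"
  have t1: "t > 1" using s0 by (simp add: t_def)
  have "b - c = of_real t * (a - c)" using s0
    by (simp add: c_def t_def complex_eq_iff field_simps)
  thus ?thesis using c1 va vb t1 by blast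
qed



lemma near_real:
  fixes X y A I \<rho> :: real
  assumes "(X + 1)^2 + y^2 = 1" "\<rho>^2 = X^2 + y^2" "0 < \<rho>" "\<rho> < 1" "\<rho> * (\<bar>I\<bar> + 1) < A"
  shows "(- A * y + I * X > 0 \<longleftrightarrow> y < 0) \<and> (- A * y + I * X < 0 \<longleftrightarrow> y > 0)"
proof -
  have "(X + 1)^2 + y^2 = (X^2 + y^2) + 2 * X + 1" by (simp add: power2_eq_square algebra_simps)
  hence X: "X = -(\<rho>^2) / 2" using assms(1,2) by linarith
  have y2: "y^2 = \<rho>^2 - \<rho>^4 / 4" using assms(2) X by (simp add: power2_eq_square power4_eq_xxxx algebra_simps)
  have r2: "\<rho>^2 < 1" using assms(3,4) by (simp add: power_less_one_iff)
  have y2b: "y^2 \<ge> 3/4 * \<rho>^2"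
  proof -
    have "\<rho>^4 = \<rho>^2 * \<rho>^2" by (simp add: power4_eq_xxxx power2_eq_square)
    also have "\<dots> \<le> \<rho>^2 * 1" using r2 by (intro mult_left_mono) auto
    finally show ?thesis using y2 by simp
  qed
  have "\<rho> * (\<bar>I\<bar> + 1) > 0" using assms(3) by (simp add: add_nonneg_pos)
  hence A0: "A > 0" using assms(5) by linarith
  have "\<rho> * (\<bar>I\<bar> + 1) = \<bar>I\<bar> * \<rho> + \<rho>" by (simp add: algebra_simps)
  hence IB: "\<bar>I\<bar> * \<rho> < A" using assms(3,5) by linarith
  have sq: "(I * X)^2 < (A * y)^2"
  proof -
    have "(I * X)^2 = (\<bar>I\<bar> * \<rho>)^2 * \<rho>^2 / 4" using X by (simp add: power2_eq_square power_mult_distrib)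
    also have "\<dots> < A^2 * \<rho>^2 / 4"
    proof -
      have "(\<bar>I\<bar> * \<rho>)^2 < A^2" using IB assms(3) by (intro power_strict_mono) auto
      thus ?thesis using assms(3) by simp
    qed
    also have "\<dots> \<le> A^2 * (3/4 * \<rho>^2)" by simp
    also have "\<dots> \<le> A^2 * y^2" using y2b by (intro mult_left_mono) auto
    finally show ?thesis by (simp add: power_mult_distrib)
  qed
  hence "\<bar>I * X\<bar>^2 < \<bar>A * y\<bar>^2" by (simp only: power2_abs)
  hence abs: "\<bar>I * X\<bar> < \<bar>A * y\<bar>" by (rule power_less_imp_less_base) simp
  have y0: "y \<noteq> 0" using abs by auto
  show ?thesis
  proof (cases "y > 0")
    case True
    hence "\<bar>A * y\<bar> = A * y" using A0 by simp
    thus ?thesis using abs True by auto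
  next
    case False
    hence "y < 0" using y0 by simp
    hence "\<bar>A * y\<bar> = - A * y" using A0 by (simp add: abs_if mult_pos_neg)
    thus ?thesis using abs \<open>y < 0\<close> by auto
  qed
qed

lemma near:
  assumes c: "cmod c = 1" and d: "Re (cnj c * d) < 0"
  shows "\<exists>r>0. \<forall>w. cmod w = 1 \<and> w \<noteq> c \<and> cmod (w - c) < r \<longrightarrow>
     (cross d (w - c) > 0 \<longleftrightarrow> Im (cnj c * w) < 0) \<and> (cross d (w - c) < 0 \<longleftrightarrow> Im (cnj c * w) > 0)"
proof -
  define e where "e = cnj d * c"
  define A where "A = - Re e"
  have A0: "A > 0" using d by (simp add: A_def e_def algebra_simps)
  define r where "r = min 1 (A / (\<bar>Im e\<bar> + 2))"
  have r0: "r > 0" using A0 by (simp add: r_def)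
  have cc: "c * cnj c = 1" using complex_norm_square[of c] c by simp
  show ?thesis
  proof (rule exI[of _ r], rule conjI[OF r0], intro allI impI)
    fix w assume w: "cmod w = 1 \<and> w \<noteq> c \<and> cmod (w - c) < r"
    define \<zeta> where "\<zeta> = cnj c * w"
    have wz: "w = c * \<zeta>" using cc by (simp add: \<zeta>_def mult.assoc[symmetric])
    have z1: "cmod \<zeta> = 1" using w c by (simp add: \<zeta>_def norm_mult)
    have cr: "cross d (w - c) = - A * Im \<zeta> + Im e * (Re \<zeta> - 1)"
    proof -
      have h: "cnj d * (w - c) = e * (\<zeta> - 1)" by (simp add: wz e_def algebra_simps)
      have "cross d (w - c) = Im (e * (\<zeta> - 1))" by (simp only: cross_def h)
      also have "\<dots> = - A * Im \<zeta> + Im e * (Re \<zeta> - 1)" by (simp add: A_def algebra_simps)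
      finally show ?thesis .
    qed
    define \<rho> where "\<rho> = cmod (w - c)"
    have "w - c = (\<zeta> - 1) * c" by (simp add: wz algebra_simps)
    hence rho: "\<rho> = cmod (\<zeta> - 1)" using c by (simp add: \<rho>_def norm_mult)
    have e1: "((Re \<zeta> - 1) + 1)^2 + (Im \<zeta>)^2 = 1" using z1 by (simp add: cmod_power2[symmetric])
    have e2: "\<rho>^2 = (Re \<zeta> - 1)^2 + (Im \<zeta>)^2" using rho by (simp add: cmod_power2)
    have p0: "0 < \<rho>" using w by (simp add: \<rho>_def)
    have p1: "\<rho> < 1" using w by (simp add: \<rho>_def r_def)
    have p2: "\<rho> * (\<bar>Im e\<bar> + 1) < A"
    proof -
      have "\<rho> * (\<bar>Im e\<bar> + 1) \<le> r * (\<bar>Im e\<bar> + 1)" using w by (intro mult_right_mono) (auto simp: \<rho>_def)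
      also have "\<dots> \<le> A / (\<bar>Im e\<bar> + 2) * (\<bar>Im e\<bar> + 1)" by (intro mult_right_mono) (auto simp: r_def)
      also have "\<dots> < A" using A0 by (simp add: field_simps)
      finally show ?thesis .
    qed
    have "Im (cnj c * w) = Im \<zeta>" by (simp add: \<zeta>_def)
    thus "(cross d (w - c) > 0 \<longleftrightarrow> Im (cnj c * w) < 0) \<and> (cross d (w - c) < 0 \<longleftrightarrow> Im (cnj c * w) > 0)"
      using near_real[OF e1 e2 p0 p1 p2] cr by simp
  qed
qed



fun Val :: "complex set \<Rightarrow> complex list \<Rightarrow> complex \<Rightarrow> bool" where
  "Val V [] z = True" | "Val V (a#W) z = (validv V a z \<and> Val V W (msym a z))"

fun NearW :: "complex set \<Rightarrow> real \<Rightarrow> complex list \<Rightarrow> complex \<Rightarrow> bool" where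
  "NearW V s [] c = True"
| "NearW V s (w#W) c = ((\<forall>v. validv V v c \<longrightarrow> s * (ff w c - ff v c) \<ge> 0) \<and> NearW V s W (msym w c))"

lemma valid_limit:
  assumes "\<forall>n. validv V w (y n)" "y \<longlonglongrightarrow> c" shows "validv V w c"
  unfolding validv_def
proof (intro conjI ballI)
  show "w \<in> V" using assms(1) by (simp add: validv_def)
  fix p assume p: "p \<in> V"
  have "(\<lambda>n. cross (w - y n) (p - y n)) \<longlonglongrightarrow> cross (w - c) (p - c)"
    unfolding cross_def by (intro tendsto_intros assms(2))
  moreover have "\<forall>n. 0 \<le> cross (w - y n) (p - y n)" using assms(1) p by (simp add: validv_def)
  ultimately show "0 \<le> cross (w - c) (p - c)" by (intro LIMSEQ_le_const) auto
qed

lemma inward: assumes "cmod c = 1" "cmod w < 1" shows "Re (cnj c * (w - c)) < 0"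
proof -
  have "Re (cnj c * w) \<le> cmod (cnj c * w)" by (rule complex_Re_le_cmod)
  also have "\<dots> = cmod w" using assms by (simp add: norm_mult)
  finally have "Re (cnj c * w) < 1" using assms by simp
  moreover have "Re (cnj c * c) = 1" using assms(1) complex_norm_square[of c]
    by (metis Re_complex_of_real mult.commute one_power2)
  ultimately show ?thesis by (simp add: algebra_simps)
qed

lemma inward2: assumes "cmod a = 1" "cmod b = 1" "a \<noteq> b" shows "Re (cnj a * (b - a)) < 0"
proof -
  have "Re a \<noteq> Re b \<or> Im a \<noteq> Im b" using assms(3) complex_eq_iff by blast
  hence pos: "(Re b - Re a)^2 + (Im b - Im a)^2 > 0"
  proof
    assume "Re a \<noteq> Re b"
    hence "(Re b - Re a)^2 > 0" by simp
    thus ?thesis by (simp add: add_pos_nonneg)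
  next
    assume "Im a \<noteq> Im b"
    hence "(Im b - Im a)^2 > 0" by simp
    thus ?thesis by (simp add: add_nonneg_pos)
  qed
  have a1: "(Re a)^2 + (Im a)^2 = 1" using assms(1) by (simp add: cmod_power2[symmetric])
  have b1: "(Re b)^2 + (Im b)^2 = 1" using assms(2) by (simp add: cmod_power2[symmetric])
  have "2 * Re (cnj a * (b - a)) = - ((Re b - Re a)^2 + (Im b - Im a)^2) + ((Re b)^2 + (Im b)^2) - ((Re a)^2 + (Im a)^2)"
    by (simp add: power2_eq_square algebra_simps)
  thus ?thesis using pos a1 b1 by linarith
qed

lemma parallel:
  assumes c: "cmod c = 1" and Vb: "V \<subseteq> ball 0 1" and vw: "validv V w c" and vv: "validv V v c"
  shows "\<exists>t>0. v - c = of_real t * (w - c)"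
proof -
  have wV: "w \<in> V" "v \<in> V" using vw vv by (auto simp: validv_def)
  have w1: "cmod w < 1" "cmod v < 1" using wV Vb by auto
  define u where "u = w - c"
  define q where "q = v - c"
  have c1: "cross u q \<ge> 0" using vw wV by (simp add: validv_def u_def q_def)
  have c2: "cross q u \<ge> 0" using vv wV by (simp add: validv_def u_def q_def)
  have "cross q u = - cross u q" by (simp add: cross_comp algebra_simps)
  have m1: "Re q * Im u = Im u * Re q" "Im q * Re u = Re u * Im q" by simp_all
  have cr: "Re u * Im q = Im u * Re q" using c1 c2 m1 unfolding cross_comp by linarith
  have ru: "Re (cnj c * u) < 0" "Re (cnj c * q) < 0" using inward[OF c w1(1)] inward[OF c w1(2)] by (auto simp: u_def q_def)
  have u0: "u \<noteq> 0" using ru by auto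
  define t where "t = (Re u * Re q + Im u * Im q) / ((Re u)^2 + (Im u)^2)"
  have nz: "(Re u)^2 + (Im u)^2 \<noteq> 0" using u0 by (simp add: complex_eq_iff)
  have qt: "q = of_real t * u"
  proof -
    have "Re q * ((Re u)^2 + (Im u)^2) = (Re u * Re q + Im u * Im q) * Re u"
      using cr by (simp add: power2_eq_square algebra_simps)
    moreover have "Im q * ((Re u)^2 + (Im u)^2) = (Re u * Re q + Im u * Im q) * Im u"
      using cr by (simp add: power2_eq_square algebra_simps)
    ultimately show ?thesis using nz unfolding t_def by (simp add: complex_eq_iff field_simps)
  qed
  have "Re (cnj c * q) = t * Re (cnj c * u)" unfolding qt by (simp add: algebra_simps)
  hence "t * Re (cnj c * u) < 0" using ru by simp
  hence "t > 0" using ru by (simp add: mult_less_0_iff)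
  thus ?thesis using qt unfolding u_def q_def by blast
qed

lemma ff_param:
  assumes c: "cmod c = 1" and t: "t > 0" and d: "d \<noteq> 0"
  shows "ff (c + of_real t * d) c = (- 2 * Re (cnj c * d) - t * (cmod d)^2) / (t * (cmod d)^2)"
proof -
  have c1: "(Re c)^2 + (Im c)^2 = 1" using c by (simp add: cmod_power2[symmetric])
  have "cmod (1 - cnj (c + of_real t * d) * c) = cmod (c - (c + of_real t * d))"
    by (rule cnorm[OF c])
  also have "\<dots> = t * cmod d" using t by (simp add: norm_mult)
  finally have den: "(cmod (1 - cnj (c + of_real t * d) * c))^2 = t^2 * (cmod d)^2"
    by (simp add: power_mult_distrib)
  have num: "1 - (cmod (c + of_real t * d))^2 = - 2 * t * Re (cnj c * d) - t^2 * (cmod d)^2"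
    unfolding cmod_power2 using c1 by (simp add: power2_eq_square algebra_simps)
  have dd: "cmod d > 0" using d by simp
  show ?thesis unfolding ff_def den num using t dd by (simp add: field_simps power2_eq_square)
qed

lemma pair_cross: "cross ((c + d) - y) ((c + of_real t * d) - y) = (t - 1) * cross d (y - c)"
  by (simp add: cross_comp algebra_simps)

lemma flip:
  assumes z: "cmod z = 1" and c: "cmod c = 1" and w: "cmod w < 1"
  shows "\<exists>k>0. cross (c - msym w c) (msym w z - msym w c) = k * cross (w - c) (z - c)"
proof -
  define lz where "lz = (1 - (cmod w)\<^sup>2) / (cmod (z - w))\<^sup>2"
  define lc where "lc = (1 - (cmod w)\<^sup>2) / (cmod (c - w))\<^sup>2"
  have mz: "msym w z = w - of_real lz * (z - w)" using msym_ray[OF z w] by (simp add: lz_def algebra_simps)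
  have mc: "msym w c = w - of_real lc * (c - w)" using msym_ray[OF c w] by (simp add: lc_def algebra_simps)
  have w2: "(cmod w)^2 < 1" using w by (simp add: power_less_one_iff abs_square_less_1)
  have "z \<noteq> w" "c \<noteq> w" using z c w by auto
  hence pos: "lz > 0" "lc > 0" using w2 by (auto simp: lz_def lc_def)
  have "cross (c - msym w c) (msym w z - msym w c) = ((1 + lc) * lz) * cross (w - c) (z - c)"
    unfolding mz mc by (simp add: cross_comp algebra_simps)
  thus ?thesis using pos by (intro exI[of _ "(1 + lc) * lz"]) auto
qed

lemma msym_ne: assumes c: "cmod c = 1" and w: "cmod w < 1" shows "msym w c \<noteq> c"
proof
  assume eq: "msym w c = c"
  define lc where "lc = (1 - (cmod w)\<^sup>2) / (cmod (c - w))\<^sup>2"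
  have w2: "(cmod w)^2 < 1" using w by (simp add: power_less_one_iff abs_square_less_1)
  have cw: "c \<noteq> w" using c w by auto
  hence "lc > 0" using w2 by (auto simp: lc_def)
  have "msym w c - w = - of_real lc * (c - w)" using msym_ray[OF c w] by (simp add: lc_def)
  hence "of_real (1 + lc) * (c - w) = 0" using eq by (simp add: algebra_simps)
  thus False using cw \<open>lc > 0\<close> by (metis add_pos_pos mult_eq_0_iff of_real_eq_0_iff right_minus_eq zero_less_one order_less_irrefl)
qed

lemma msym_tendsto: assumes "y \<longlonglongrightarrow> c" "cmod c = 1" "cmod w < 1"
  shows "(\<lambda>n. msym w (y n)) \<longlonglongrightarrow> msym w c"
  unfolding msym_def using unit_den[OF assms(2,3)] by (intro tendsto_intros assms(1)) auto



lemma near_s: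
  assumes "s = 1 \<or> s = -1"
    and "(cross d (w - c) > 0 \<longleftrightarrow> Im (cnj c * w) < 0) \<and> (cross d (w - c) < 0 \<longleftrightarrow> Im (cnj c * w) > 0)"
  shows "s * cross d (w - c) > 0 \<longleftrightarrow> s * Im (cnj c * w) < 0"
  using assms by (auto simp: mult_less_0_iff zero_less_mult_iff)

lemma side:
  assumes Vb: "V \<subseteq> ball 0 1" and s: "s = 1 \<or> s = -1"
  shows "\<forall>n. Val V W (y n) \<Longrightarrow> \<forall>n. cmod (y n) = 1 \<Longrightarrow> \<forall>n. y n \<noteq> c \<Longrightarrow> y \<longlonglongrightarrow> c \<Longrightarrow> cmod c = 1
    \<Longrightarrow> eventually (\<lambda>n. s * Im (cnj c * y n) < 0) sequentially \<Longrightarrow> Val V W c \<and> NearW V s W c"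
proof (induction W arbitrary: c y)
  case Nil
  then show ?case by simp
next
  case (Cons w W)
  note pr = Cons.prems
  have vy: "\<forall>n. validv V w (y n)" "\<forall>n. Val V W (msym w (y n))" using pr(1) by auto
  have vc: "validv V w c" using valid_limit[OF vy(1) pr(4)] .
  have wV: "w \<in> V" using vc by (simp add: validv_def)
  have w1: "cmod w < 1" using wV Vb by auto
  define d where "d = w - c"
  have dI: "Re (cnj c * d) < 0" using inward[OF pr(5) w1] by (simp add: d_def)
  obtain r where r: "r > 0" "\<forall>z. cmod z = 1 \<and> z \<noteq> c \<and> cmod (z - c) < r \<longrightarrow>
     (cross d (z - c) > 0 \<longleftrightarrow> Im (cnj c * z) < 0) \<and> (cross d (z - c) < 0 \<longleftrightarrow> Im (cnj c * z) > 0)"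
    using near[OF pr(5) dI] by blast
  have "eventually (\<lambda>n. dist (y n) c < r) sequentially" using pr(4) r(1) by (rule tendstoD)
  hence ev1: "eventually (\<lambda>n. s * cross d (y n - c) > 0) sequentially"
    using pr(6)
  proof (eventually_elim)
    case (elim n)
    have "(cross d (y n - c) > 0 \<longleftrightarrow> Im (cnj c * y n) < 0) \<and> (cross d (y n - c) < 0 \<longleftrightarrow> Im (cnj c * y n) > 0)"
      using r(2) pr(2,3) elim(1) by (simp add: dist_norm)
    thus ?case using near_s[OF s] elim(2) by blast
  qed
  have nearhd: "\<forall>v. validv V v c \<longrightarrow> s * (ff w c - ff v c) \<ge> 0"
  proof (intro allI impI)
    fix v assume vv: "validv V v c"
    obtain t where t: "t > 0" "v - c = of_real t * (w - c)" using parallel[OF pr(5) Vb vc vv] by blast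
    obtain N where N: "\<forall>n\<ge>N. s * cross d (y n - c) > 0" using ev1 by (auto simp: eventually_sequentially)
    let ?X = "cross d (y N - c)"
    have sX: "s * ?X > 0" using N by simp
    have "cross (w - y N) (v - y N) \<ge> 0" using vy(1) vv by (simp add: validv_def)
    moreover have "w = c + d" "v = c + of_real t * d" using t by (simp_all add: d_def algebra_simps)
    ultimately have tX: "(t - 1) * ?X \<ge> 0" using pair_cross[of c d "y N" t] by simp
    have st: "s * (t - 1) \<ge> 0"
      using s
    proof
      assume "s = 1" thus ?thesis using sX tX by (simp add: zero_le_mult_iff)
    next
      assume "s = -1" thus ?thesis using sX tX by (simp add: zero_le_mult_iff mult_less_0_iff)
    qed
    have d0: "d \<noteq> 0" using dI by auto
    define R where "R = - 2 * Re (cnj c * d)"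
    define D where "D = (cmod d)^2"
    have R0: "R > 0" using dI by (simp add: R_def)
    have D0: "D > 0" using d0 by (simp add: D_def)
    have fw0: "ff (c + of_real 1 * d) c = (R - 1 * D) / (1 * D)" unfolding R_def D_def
      by (rule ff_param[OF pr(5) _ d0]) simp
    have fw: "ff w c = (R - D) / D" using fw0 by (simp add: d_def)
    have vd: "v = c + of_real t * d" using t by (simp add: d_def algebra_simps)
    have fv: "ff v c = (R - t * D) / (t * D)" unfolding vd R_def D_def
      by (rule ff_param[OF pr(5) t(1) d0])
    have "ff w c - ff v c = (t - 1) * (R / (t * D))" unfolding fw fv using t(1) D0
      by (simp add: field_simps)
    hence "s * (ff w c - ff v c) = (s * (t - 1)) * (R / (t * D))" by simp
    moreover have "R / (t * D) > 0" using R0 D0 t(1) by simp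
    ultimately show "s * (ff w c - ff v c) \<ge> 0" using st by (metis mult_nonneg_nonneg order_less_imp_le)
  qed
  define c' where "c' = msym w c"
  define y' where "y' = (\<lambda>n. msym w (y n))"
  have c'1: "cmod c' = 1" using msym_S pr(5) w1 by (simp add: c'_def)
  have y'1: "\<forall>n. cmod (y' n) = 1" using msym_S pr(2) w1 by (simp add: y'_def)
  have y'ne: "\<forall>n. y' n \<noteq> c'" using msym_inj[OF w1] pr(2,3,5) by (auto simp: y'_def c'_def)
  have y'lim: "y' \<longlonglongrightarrow> c'" unfolding y'_def c'_def by (rule msym_tendsto[OF pr(4,5) w1])
  have cc': "c' \<noteq> c" using msym_ne[OF pr(5) w1] by (simp add: c'_def)
  define d' where "d' = c - c'"
  have dI': "Re (cnj c' * d') < 0" using inward2[OF c'1 pr(5) cc'] by (simp add: d'_def)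
  obtain r' where r': "r' > 0" "\<forall>z. cmod z = 1 \<and> z \<noteq> c' \<and> cmod (z - c') < r' \<longrightarrow>
     (cross d' (z - c') > 0 \<longleftrightarrow> Im (cnj c' * z) < 0) \<and> (cross d' (z - c') < 0 \<longleftrightarrow> Im (cnj c' * z) > 0)"
    using near[OF c'1 dI'] by blast
  have "eventually (\<lambda>n. dist (y' n) c' < r') sequentially" using y'lim r'(1) by (rule tendstoD)
  hence ev2: "eventually (\<lambda>n. s * Im (cnj c' * y' n) < 0) sequentially"
    using ev1
  proof (eventually_elim)
    case (elim n)
    obtain k where k: "k > 0" "cross d' (y' n - c') = k * cross d (y n - c)"
      using flip[OF _ pr(5) w1, of "y n"] pr(2) by (auto simp: d'_def y'_def c'_def d_def)
    have "s * cross d' (y' n - c') = k * (s * cross d (y n - c))" unfolding k(2) by (simp add: algebra_simps)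
    hence pos: "s * cross d' (y' n - c') > 0" using k(1) elim(2) by (metis mult_pos_pos)
    have "(cross d' (y' n - c') > 0 \<longleftrightarrow> Im (cnj c' * y' n) < 0) \<and> (cross d' (y' n - c') < 0 \<longleftrightarrow> Im (cnj c' * y' n) > 0)"
      using r'(2) y'1 y'ne elim(1) by (simp add: dist_norm)
    thus ?case using near_s[OF s] pos by blast
  qed
  have IH: "Val V W c' \<and> NearW V s W c'"
    using Cons.IH[of y' c'] vy(2) y'1 y'ne y'lim c'1 ev2 by (simp add: y'_def)
  show ?case using vc nearhd IH by (simp add: c'_def)
qed



fun wordf :: "(complex \<Rightarrow> complex) \<Rightarrow> (complex \<Rightarrow> complex) \<Rightarrow> nat \<Rightarrow> complex \<Rightarrow> complex list" where
  "wordf sel t 0 z = []"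
| "wordf sel t (Suc n) z = sel z # wordf sel t n (t z)"

lemma wordf_props:
  assumes sv: "\<forall>z. cmod z = 1 \<longrightarrow> validv V (sel z) z"
    and tS: "\<forall>z. cmod z = 1 \<longrightarrow> cmod (t z) = 1"
    and tm: "\<forall>z v. cmod z = 1 \<longrightarrow> validv V v z \<longrightarrow> msym v z = t z"
  shows "cmod z = 1 \<Longrightarrow> Val V (wordf sel t n z) z \<and> gw (wordf sel t n z) z = (t ^^ n) z
    \<and> length (wordf sel t n z) = n \<and> set (wordf sel t n z) \<subseteq> V"
proof (induction n arbitrary: z)
  case 0
  then show ?case by simp
next
  case (Suc n)
  have v: "validv V (sel z) z" using sv Suc.prems by blast
  have m: "msym (sel z) z = t z" using tm Suc.prems v by blast
  have IH: "Val V (wordf sel t n (t z)) (t z) \<and> gw (wordf sel t n (t z)) (t z) = (t ^^ n) (t z)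
    \<and> length (wordf sel t n (t z)) = n \<and> set (wordf sel t n (t z)) \<subseteq> V"
    using Suc.IH tS Suc.prems by blast
  have "sel z \<in> V" using v by (simp add: validv_def)
  thus ?case using IH v m by (simp add: funpow_swap1)
qed

lemma Val_inball: "Val V W z \<Longrightarrow> V \<subseteq> ball 0 1 \<Longrightarrow> inball W"
  by (induction W arbitrary: z) (auto simp: validv_def inball_def)

lemma ff_nonneg: "cmod a < 1 \<Longrightarrow> ff a z \<ge> 0"
  unfolding ff_def by (simp add: abs_square_le_1 order_less_imp_le)

lemma ff_pos: "cmod a < 1 \<Longrightarrow> cmod z = 1 \<Longrightarrow> ff a z > 0"
  unfolding ff_def using unit_den[of z a] by (simp add: abs_square_less_1)

lemma Fw_nonneg: "inball W \<Longrightarrow> Fw W z \<ge> 0"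
  by (induction W arbitrary: z) (auto intro!: mult_nonneg_nonneg ff_nonneg)

lemma Fw_pos: "inball W \<Longrightarrow> cmod z = 1 \<Longrightarrow> Fw W z > 0"
  by (induction W arbitrary: z) (auto intro!: mult_pos_pos ff_pos simp: msym_S)

lemma prod_ge:
  assumes Vb: "V \<subseteq> ball 0 1"
    and tm: "\<forall>z v. cmod z = 1 \<longrightarrow> validv V v z \<longrightarrow> msym v z = t z"
  shows "Val V W c \<Longrightarrow> Val V W' c \<Longrightarrow> length W = length W' \<Longrightarrow> NearW V 1 W c \<Longrightarrow> cmod c = 1
     \<Longrightarrow> Fw W c \<ge> Fw W' c"
proof (induction W arbitrary: W' c)
  case Nil
  then show ?case by simp
next
  case (Cons w W)
  obtain w' W'' where W': "W' = w' # W''" using Cons.prems(3) by (cases W') auto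
  have vw: "validv V w c" and vw': "validv V w' c" using Cons.prems W' by auto
  have w1: "cmod w < 1" "cmod w' < 1" using vw vw' Vb by (auto simp: validv_def)
  have eq: "msym w' c = msym w c" using tm Cons.prems(5) vw vw' by metis
  have h: "ff w' c \<le> ff w c" using Cons.prems(4) vw' by auto
  have f1: "Val V W (msym w c)" "Val V W'' (msym w c)" "length W = length W''" "NearW V 1 W (msym w c)"
    "cmod (msym w c) = 1"
    using Cons.prems W' eq msym_S[OF Cons.prems(5) w1(1)] by auto
  have IH: "Fw W'' (msym w c) \<le> Fw W (msym w c)" by (rule Cons.IH[OF f1])
  have "inball W''" using Cons.prems(2) W' Vb eq by (auto intro: Val_inball)
  hence "Fw W'' (msym w c) \<ge> 0" by (rule Fw_nonneg)
  thus ?case using W' eq h IH ff_nonneg[OF w1(1)] by (auto intro: mult_mono)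
qed

lemma y_seq:
  assumes c: "cmod c = 1" and s: "s = 1 \<or> s = -1"
  defines "y \<equiv> (\<lambda>n::nat. c * cis (- s / (real n + 1)))"
  shows "\<forall>n. cmod (y n) = 1" "\<forall>n. y n \<noteq> c" "y \<longlonglongrightarrow> c" "\<forall>n. s * Im (cnj c * y n) < 0" "inj y"
proof -
  have cc: "cnj c * c = 1" using complex_norm_square[of c] c by (simp add: mult.commute)
  have im: "Im (cnj c * y n) = - s * sin (1 / (real n + 1))" for n
  proof -
    have "cnj c * y n = cis (- s / (real n + 1))" unfolding y_def using cc by (simp add: mult.assoc[symmetric])
    moreover have "sin (- s / (real n + 1)) = - s * sin (1 / (real n + 1))" using s by auto
    ultimately show ?thesis by simp
  qed
  have sp: "sin (1 / (real n + 1)) > 0" for n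
  proof -
    have "1 / (real n + 1) \<le> 1" by simp
    hence "1 / (real n + 1) < pi" using pi_gt3 by linarith
    thus ?thesis by (intro sin_gt_zero) auto
  qed
  show "\<forall>n. cmod (y n) = 1" using c by (simp add: y_def norm_mult)
  show "\<forall>n. s * Im (cnj c * y n) < 0" using s im sp by auto
  show "\<forall>n. y n \<noteq> c"
  proof
    fix n show "y n \<noteq> c"
    proof
      assume "y n = c"
      hence "Im (cnj c * y n) = 0" using cc by simp
      thus False using im[of n] sp[of n] s by auto
    qed
  qed
  have "(\<lambda>n. - s * inverse (real (Suc n))) \<longlonglongrightarrow> - s * 0"
    by (intro tendsto_intros LIMSEQ_inverse_real_of_nat)
  moreover have "(\<lambda>n. - s * inverse (real (Suc n))) = (\<lambda>n. - s / (real n + 1))"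
    by (simp add: divide_inverse add.commute)
  ultimately have "(\<lambda>n. - s / (real n + 1)) \<longlonglongrightarrow> - s * 0" by simp
  hence "(\<lambda>n. cis (- s / (real n + 1))) \<longlonglongrightarrow> cis (- s * 0)" by (rule tendsto_cis)
  hence "(\<lambda>n. c * cis (- s / (real n + 1))) \<longlonglongrightarrow> c * cis (- s * 0)" by (rule tendsto_mult[OF tendsto_const])
  thus "y \<longlonglongrightarrow> c" by (simp add: y_def)
  show "inj y"
  proof (rule injI)
    fix n m assume "y n = y m"
    hence "Im (cnj c * y n) = Im (cnj c * y m)" by simp
    hence "sin (1 / (real n + 1)) = sin (1 / (real m + 1))" using im s by auto
    moreover have "1 / (real k + 1) \<le> pi / 2" "- (pi / 2) \<le> 1 / (real k + 1)" for k
    proof -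
      have "1 / (real k + 1) \<le> 1" by simp
      thus "1 / (real k + 1) \<le> pi / 2" using pi_gt3 by linarith
      show "- (pi / 2) \<le> 1 / (real k + 1)" using pi_gt_zero by (smt (verit) divide_nonneg_nonneg of_nat_0_le_iff)
    qed
    ultimately have "1 / (real n + 1) = 1 / (real m + 1)" using sin_inj_pi by blast
    thus "n = m" by simp
  qed
qed



lemma get_word:
  assumes Vb: "V \<subseteq> ball 0 1" and finV: "finite V" and s: "s = 1 \<or> s = -1" and c: "cmod c = 1"
    and sv: "\<forall>z. cmod z = 1 \<longrightarrow> validv V (sel z) z"
    and tS: "\<forall>z. cmod z = 1 \<longrightarrow> cmod (t z) = 1"
    and tm: "\<forall>z v. cmod z = 1 \<longrightarrow> validv V v z \<longrightarrow> msym v z = t z"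
    and per: "\<forall>\<xi>. cmod \<xi> = 1 \<longrightarrow> (t ^^ N) \<xi> = \<xi>"
  shows "\<exists>W. length W = N \<and> Val V W c \<and> NearW V s W c \<and> inball W \<and> (\<forall>z. cmod z = 1 \<longrightarrow> gw W z = z)"
proof -
  define y where "y = (\<lambda>n::nat. c * cis (- s / (real n + 1)))"
  have ys: "\<forall>n. cmod (y n) = 1" "\<forall>n. y n \<noteq> c" "y \<longlonglongrightarrow> c" "\<forall>n. s * Im (cnj c * y n) < 0" "inj y"
    unfolding y_def using y_seq[OF c s] by auto
  define wd where "wd = (\<lambda>n. wordf sel t N (y n))"
  have props: "Val V (wd n) (y n) \<and> gw (wd n) (y n) = (t ^^ N) (y n) \<and> length (wd n) = N \<and> set (wd n) \<subseteq> V" for n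
    unfolding wd_def by (rule wordf_props[OF sv tS tm]) (use ys(1) in blast)
  have "range wd \<subseteq> {xs. set xs \<subseteq> V \<and> length xs = N}" using props by auto
  hence fin: "finite (range wd)" by (rule finite_subset) (rule finite_lists_length_eq[OF finV])
  obtain W where W: "infinite (wd -` {W})" using inf_img_fin_dom[OF fin infinite_UNIV_nat] by (elim bexE)
  obtain r :: "nat \<Rightarrow> nat" where r: "strict_mono r" "\<forall>n. r n \<in> wd -` {W}"
    using infinite_enumerate[OF W] by (elim exE conjE)
  have wr: "wd (r n) = W" for n using r(2) by auto
  define z where "z = y \<circ> r"
  have zV: "\<forall>n. Val V W (z n)"
  proof
    fix n show "Val V W (z n)" using props[of "r n"] wr[of n] by (simp add: z_def)
  qed
  have z1: "\<forall>n. cmod (z n) = 1" using ys(1) by (simp add: z_def)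
  have zne: "\<forall>n. z n \<noteq> c" using ys(2) by (simp add: z_def)
  have zlim: "z \<longlonglongrightarrow> c" unfolding z_def by (rule LIMSEQ_subseq_LIMSEQ[OF ys(3) r(1)])
  have zev: "eventually (\<lambda>n. s * Im (cnj c * z n) < 0) sequentially"
    using ys(4) by (simp add: z_def)
  have sd: "Val V W c \<and> NearW V s W c"
    by (rule side[OF Vb s, where W=W and y=z and c=c, OF zV z1 zne zlim c zev])
  have len: "length W = N" using props[of "r 0"] wr by simp
  have ib: "inball W" using sd Vb by (intro Val_inball[of V W c]) auto
  have fixz: "gw W (z n) = z n" for n
  proof -
    have "gw W (z n) = (t ^^ N) (z n)" using props[of "r n"] wr by (simp add: z_def)
    thus ?thesis using per z1 by simp
  qed
  have zinj: "z n = z m \<Longrightarrow> n = m" for n m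
  proof -
    assume "z n = z m"
    hence "r n = r m" using ys(5) by (simp add: z_def inj_def)
    thus "n = m" using r(1) by (simp add: strict_mono_eq)
  qed
  have "\<forall>x. cmod x = 1 \<longrightarrow> gw W x = x"
  proof (intro allI impI)
    fix x :: complex assume "cmod x = 1"
    have ne: "z 0 \<noteq> z 1" "z 0 \<noteq> z 2" "z 1 \<noteq> z 2"
      using zinj[of 0 1] zinj[of 0 2] zinj[of 1 2] by auto
    show "gw W x = x"
      by (rule rigid[OF ib z1[rule_format, of 0] z1[rule_format, of 1] z1[rule_format, of 2] ne
            fixz fixz fixz \<open>cmod x = 1\<close>])
  qed
  thus ?thesis using len sd ib by blast
qed

lemma ff_compare:
  assumes c: "cmod c = 1" and a: "cmod a < 1" and t: "t > 1" and b: "b - c = of_real t * (a - c)"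
  shows "ff a c > ff b c"
proof -
  define d where "d = a - c"
  have dI: "Re (cnj c * d) < 0" using inward[OF c a] by (simp add: d_def)
  have d0: "d \<noteq> 0" using dI by auto
  define R where "R = - 2 * Re (cnj c * d)"
  define D where "D = (cmod d)^2"
  have R0: "R > 0" using dI by (simp add: R_def)
  have D0: "D > 0" using d0 by (simp add: D_def)
  have fa0: "ff (c + of_real 1 * d) c = (R - 1 * D) / (1 * D)" unfolding R_def D_def
    by (rule ff_param[OF c _ d0]) simp
  have fa: "ff a c = (R - D) / D" using fa0 by (simp add: d_def)
  have bd: "b = c + of_real t * d" using b by (simp add: d_def algebra_simps)
  have fb: "ff b c = (R - t * D) / (t * D)" unfolding bd R_def D_def
    by (rule ff_param[OF c _ d0]) (use t in simp)
  have "ff a c - ff b c = (t - 1) * (R / (t * D))" unfolding fa fb using t D0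
    by (simp add: field_simps)
  moreover have "(t - 1) * (R / (t * D)) > 0" using t R0 D0 by simp
  ultimately show ?thesis by simp
qed



theorem mainTheorem17:
  fixes V :: "complex set" and \<tau> :: "complex \<Rightarrow> complex"
  assumes "hyp_convex_polygon V"
    and "boundary_extension V \<tau>"
  shows "\<not> (\<exists>N::nat. N \<ge> 1 \<and> (\<forall>\<xi>\<in>circle_at_infinity. (\<tau> ^^ N) \<xi> = \<xi>))"
proof
  assume "\<exists>N::nat. N \<ge> 1 \<and> (\<forall>\<xi>\<in>circle_at_infinity. (\<tau> ^^ N) \<xi> = \<xi>)"
  then obtain N :: nat where N1: "N \<ge> 1" and perS: "\<forall>\<xi>\<in>circle_at_infinity. (\<tau> ^^ N) \<xi> = \<xi>" by blast
  have finV: "finite V" and Vb: "V \<subseteq> ball 0 1" and int: "interior (convex hull V) \<noteq> {}"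
    using assms(1) unfolding hyp_convex_polygon_def hyp_plane_def by auto
  have circ: "\<xi> \<in> circle_at_infinity \<longleftrightarrow> cmod \<xi> = 1" for \<xi> by (simp add: circle_at_infinity_def)
  have per: "\<forall>\<xi>. cmod \<xi> = 1 \<longrightarrow> (\<tau> ^^ N) \<xi> = \<xi>" using perS circ by blast
  have "\<exists>a0\<in>V. \<exists>b0\<in>V. a0 \<noteq> b0"
  proof (rule ccontr)
    assume "\<not> ?thesis"
    hence "V = {} \<or> (\<exists>a. V = {a})" by blast
    thus False using int by auto
  qed
  then obtain a0 b0 where ab0: "a0 \<in> V" "b0 \<in> V" "a0 \<noteq> b0" by blast
  have Vne: "V \<noteq> {}" using ab0 by auto
  obtain c0 a b t where e: "cmod c0 = 1" "validv V a c0" "validv V b c0" "t > 1" "b - c0 = of_real t * (a - c0)"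
    using edge_ex[OF finV Vb ab0] by blast
  define sel where "sel = (\<lambda>z. SOME a. validv V a z)"
  have sv: "\<forall>z. cmod z = 1 \<longrightarrow> validv V (sel z) z"
  proof (intro allI impI)
    fix z :: complex assume "cmod z = 1"
    hence "\<exists>a. validv V a z" using valid_ex[OF finV Vne Vb] by blast
    thus "validv V (sel z) z" unfolding sel_def by (rule someI_ex)
  qed
  have tS: "\<forall>z. cmod z = 1 \<longrightarrow> cmod (\<tau> z) = 1"
    using assms(2) circ unfolding boundary_extension_def by blast
  have tm: "\<forall>z v. cmod z = 1 \<longrightarrow> validv V v z \<longrightarrow> msym v z = \<tau> z"
    using tau_eq[OF assms(1,2)] by metis
  obtain W1 where W1: "length W1 = N" "Val V W1 c0" "NearW V 1 W1 c0" "inball W1" "\<forall>z. cmod z = 1 \<longrightarrow> gw W1 z = z"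
    using get_word[OF Vb finV _ e(1) sv tS tm per, of 1] by auto
  obtain W2 where W2: "length W2 = N" "Val V W2 c0" "NearW V (-1) W2 c0" "inball W2" "\<forall>z. cmod z = 1 \<longrightarrow> gw W2 z = z"
    using get_word[OF Vb finV _ e(1) sv tS tm per, of "-1"] by auto
  have F1: "Fw W1 c0 = 1" using id_F[OF W1(4) W1(5) e(1)] .
  have F2: "Fw W2 c0 = 1" using id_F[OF W2(4) W2(5) e(1)] .
  obtain w T1 where w: "W1 = w # T1" using W1(1) N1 by (cases W1) auto
  obtain w' T2 where w': "W2 = w' # T2" using W2(1) N1 by (cases W2) auto
  have vw: "validv V w c0" and vw': "validv V w' c0" using W1(2) W2(2) w w' by auto
  have w1: "cmod w < 1" "cmod w' < 1" using vw vw' Vb by (auto simp: validv_def)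
  have a1: "cmod a < 1" using e(2) Vb by (auto simp: validv_def)
  have h1: "ff w c0 \<ge> ff a c0" using W1(3) w e(2) by auto
  have h2: "ff w' c0 \<le> ff b c0" using W2(3) w' e(3) by auto
  have h3: "ff a c0 > ff b c0" by (rule ff_compare[OF e(1) a1 e(4,5)])
  have hd: "ff w c0 > ff w' c0" using h1 h2 h3 by linarith
  have eq: "msym w' c0 = msym w c0" using tm e(1) vw vw' by metis
  have c1: "cmod (msym w c0) = 1" using msym_S[OF e(1) w1(1)] .
  have tails: "Fw T1 (msym w c0) \<ge> Fw T2 (msym w c0)"
    by (rule prod_ge[OF Vb tm]) (use W1 W2 w w' eq c1 in auto)
  have T2pos: "Fw T2 (msym w c0) > 0"
    by (rule Fw_pos) (use W2(4) w' c1 in auto)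
  have "Fw W1 c0 = ff w c0 * Fw T1 (msym w c0)" using w by simp
  also have "\<dots> \<ge> ff w c0 * Fw T2 (msym w c0)" using tails ff_nonneg[OF w1(1)] by (simp add: mult_left_mono)
  finally have "Fw W1 c0 \<ge> ff w c0 * Fw T2 (msym w c0)" .
  moreover have "ff w c0 * Fw T2 (msym w c0) > ff w' c0 * Fw T2 (msym w c0)"
    using hd T2pos by simp
  moreover have "Fw W2 c0 = ff w' c0 * Fw T2 (msym w c0)" using w' eq by simp
  ultimately have "Fw W1 c0 > Fw W2 c0" by linarith
  thus False using F1 F2 by simp
qed

end
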